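(* Let $G=(V,E)$ be a finite graph of maximum degree $\Delta$ with adjacency matrix $A$, and let $\boldsymbol\lambda\in(0,\infty)^V$ satisfy $\lambda_u<1/\Delta$ for all $u$. Let $B=\mathrm{diag}(1+1/\lambda_u: u\in V)$. Then every vector $\mathbf x\in\mathbb R^V$ with $\mathbf x\ge\mathbf 0$ and $(B+A)\mathbf x\ge\mathbf 1$ satisfies \[ \sum_{u\in V}x_u\ \ge\ \sum_{u\in V}\frac{\lambda_u}{1+(d_u+1)\lambda_u}. \]
   Context: $d_u$ denotes the degree of $u$; vector inequalities are entrywise; $\mathbf 1$ is the all-ones vector. *)

theory Defs
  imports Complex_Main
begin

definition simple_graph :: "'a set \<Rightarrow> ('a \<Rightarrow> 'a \<Rightarrow> bool) \<Rightarrow> bool" where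
  "simple_graph V E \<longleftrightarrow> finite V \<and> (\<forall>u v. E u v \<longrightarrow> E v u)
     \<and> (\<forall>u. \<not> E u u) \<and> (\<forall>u v. E u v \<longrightarrow> u \<in> V \<and> v \<in> V)"

definition neighbours :: "'a set \<Rightarrow> ('a \<Rightarrow> 'a \<Rightarrow> bool) \<Rightarrow> 'a \<Rightarrow> 'a set" where
  "neighbours V E u = {v \<in> V. E u v}"

definition degree :: "'a set \<Rightarrow> ('a \<Rightarrow> 'a \<Rightarrow> bool) \<Rightarrow> 'a \<Rightarrow> nat" where
  "degree V E u = card (neighbours V E u)"

definition max_degree :: "'a set \<Rightarrow> ('a \<Rightarrow> 'a \<Rightarrow> bool) \<Rightarrow> nat" where
  "max_degree V E = Max (insert 0 (degree V E ` V))"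

definition adj_matrix :: "('a \<Rightarrow> 'a \<Rightarrow> bool) \<Rightarrow> 'a \<Rightarrow> 'a \<Rightarrow> real" where
  "adj_matrix E u v = (if E u v then 1 else 0)"

definition diag_B :: "('a \<Rightarrow> real) \<Rightarrow> 'a \<Rightarrow> 'a \<Rightarrow> real" where
  "diag_B lam u v = (if u = v then 1 + 1 / lam u else 0)"

definition mat_vec :: "'a set \<Rightarrow> ('a \<Rightarrow> 'a \<Rightarrow> real) \<Rightarrow> ('a \<Rightarrow> real) \<Rightarrow> 'a \<Rightarrow> real" where
  "mat_vec V M x u = (\<Sum>v\<in>V. M u v * x v)"

end

theory Submission imports Defs begin
lemma gauss_solve:
  fixes M :: "'a \<Rightarrow> 'a \<Rightarrow> real"
  assumes "finite V"
    and "\<forall>u\<in>V. (\<Sum>v\<in>V-{u}. \<bar>M u v\<bar>) < \<bar>M u u\<bar>"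
  shows "\<exists>z. \<forall>u\<in>V. (\<Sum>v\<in>V. M u v * z v) = b u"
  using assms
proof (induction V arbitrary: M b rule: finite_induct)
  case empty
  then show ?case by simp
next
  case (insert p F)
  have dom: "\<And>u. u \<in> insert p F \<Longrightarrow> (\<Sum>v\<in>insert p F-{u}. \<bar>M u v\<bar>) < \<bar>M u u\<bar>"
    using insert.prems by blast
  have Mpp: "(\<Sum>v\<in>F. \<bar>M p v\<bar>) < \<bar>M p p\<bar>"
    using dom[of p] insert.hyps by (simp add: Diff_insert0 )
  have sumnn: "0 \<le> (\<Sum>v\<in>F. \<bar>M p v\<bar>)" by (simp add: sum_nonneg)
  hence Mpp0: "M p p \<noteq> 0" using Mpp by linarith
  define M' where "M' = (\<lambda>u v. M u v - M u p * M p v / M p p)"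
  define b' where "b' = (\<lambda>u. b u - M u p * b p / M p p)"
  have dom': "\<forall>u\<in>F. (\<Sum>v\<in>F-{u}. \<bar>M' u v\<bar>) < \<bar>M' u u\<bar>"
  proof
    fix u assume u: "u \<in> F"
    have upne: "u \<noteq> p" using u insert.hyps by auto
    let ?c = "\<bar>M u p\<bar> / \<bar>M p p\<bar>"
    have c0: "?c \<ge> 0" by simp
    have "(\<Sum>v\<in>F-{u}. \<bar>M' u v\<bar>) \<le> (\<Sum>v\<in>F-{u}. \<bar>M u v\<bar> + ?c * \<bar>M p v\<bar>)"
    proof (rule sum_mono)
      fix v
      have "\<bar>M u p * M p v / M p p\<bar> = ?c * \<bar>M p v\<bar>" by (simp add: abs_mult)
      then show "\<bar>M' u v\<bar> \<le> \<bar>M u v\<bar> + ?c * \<bar>M p v\<bar>" unfolding M'_def by linarith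
    qed
    also have "\<dots> = (\<Sum>v\<in>F-{u}. \<bar>M u v\<bar>) + ?c * (\<Sum>v\<in>F-{u}. \<bar>M p v\<bar>)"
      by (simp add: sum.distrib sum_distrib_left)
    finally have A: "(\<Sum>v\<in>F-{u}. \<bar>M' u v\<bar>) \<le> (\<Sum>v\<in>F-{u}. \<bar>M u v\<bar>) + ?c * (\<Sum>v\<in>F-{u}. \<bar>M p v\<bar>)" .
    have B: "\<bar>M' u u\<bar> \<ge> \<bar>M u u\<bar> - ?c * \<bar>M p u\<bar>"
    proof -
      have "\<bar>M u p * M p u / M p p\<bar> = ?c * \<bar>M p u\<bar>" by (simp add: abs_mult)
      then show ?thesis unfolding M'_def by linarith
    qed
    have sF: "(\<Sum>v\<in>F. \<bar>M p v\<bar>) = \<bar>M p u\<bar> + (\<Sum>v\<in>F-{u}. \<bar>M p v\<bar>)"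
      using u insert.hyps(1) by (simp add: sum.remove)
    have "?c * (\<Sum>v\<in>F. \<bar>M p v\<bar>) \<le> \<bar>M u p\<bar>"
    proof -
      have "?c * (\<Sum>v\<in>F. \<bar>M p v\<bar>) \<le> ?c * \<bar>M p p\<bar>"
        using Mpp c0 by (intro mult_left_mono) auto
      also have "\<dots> = \<bar>M u p\<bar>" using Mpp0 by simp
      finally show ?thesis .
    qed
    moreover have "(\<Sum>v\<in>insert p F-{u}. \<bar>M u v\<bar>) = \<bar>M u p\<bar> + (\<Sum>v\<in>F-{u}. \<bar>M u v\<bar>)"
    proof -
      have "insert p F - {u} = insert p (F - {u})" using upne by auto
      then show ?thesis using insert.hyps by simp
    qed
    moreover have "(\<Sum>v\<in>insert p F-{u}. \<bar>M u v\<bar>) < \<bar>M u u\<bar>" using dom u by blast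
    ultimately show "(\<Sum>v\<in>F-{u}. \<bar>M' u v\<bar>) < \<bar>M' u u\<bar>"
      using A B sF by (simp add: distrib_left) 
  qed
  obtain z' where z': "\<forall>u\<in>F. (\<Sum>v\<in>F. M' u v * z' v) = b' u"
    using insert.IH[OF dom'] by blast
  define zp where "zp = (b p - (\<Sum>v\<in>F. M p v * z' v)) / M p p"
  define z where "z = z'(p := zp)"
  have zF: "\<And>v. v \<in> F \<Longrightarrow> z v = z' v" unfolding z_def using insert.hyps by auto
  have rowsum: "\<And>u. (\<Sum>v\<in>insert p F. M u v * z v) = M u p * zp + (\<Sum>v\<in>F. M u v * z' v)"
    using insert.hyps zF by (simp add: z_def)
  show ?case
  proof (intro exI ballI)
    fix u assume u: "u \<in> insert p F"
    show "(\<Sum>v\<in>insert p F. M u v * z v) = b u"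
    proof (cases "u = p")
      case True
      then show ?thesis using rowsum[of p] Mpp0 by (simp add: zp_def field_simps)
    next
      case False
      then have uF: "u \<in> F" using u by auto
      have "(\<Sum>v\<in>F. M' u v * z' v) = (\<Sum>v\<in>F. M u v * z' v) - M u p / M p p * (\<Sum>v\<in>F. M p v * z' v)"
        unfolding M'_def by (simp add: algebra_simps sum_subtractf sum_distrib_left)
      then have "(\<Sum>v\<in>F. M u v * z' v) = b u - M u p * b p / M p p + M u p / M p p * (\<Sum>v\<in>F. M p v * z' v)"
        using z' uF unfolding b'_def by simp
      moreover have "M u p * zp = M u p * b p / M p p - M u p / M p p * (\<Sum>v\<in>F. M p v * z' v)"
        unfolding zp_def by (simp add: diff_divide_distrib right_diff_distrib)
      ultimately show ?thesis using rowsum[of u] by simp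
    qed
  qed
qed

definition Mop :: "'a set \<Rightarrow> ('a \<Rightarrow> 'a \<Rightarrow> bool) \<Rightarrow> ('a \<Rightarrow> real) \<Rightarrow> ('a \<Rightarrow> real) \<Rightarrow> 'a \<Rightarrow> real" where
  "Mop V E D x u = D u * x u + (\<Sum>v\<in>neighbours V E u. x v)"

lemma nb_sub: "neighbours V E u \<subseteq> V" unfolding neighbours_def by auto

lemma nb_fin: "simple_graph V E \<Longrightarrow> finite (neighbours V E u)"
  using nb_sub finite_subset unfolding simple_graph_def by metis

lemma sum_nb: "simple_graph V E \<Longrightarrow> (\<Sum>v\<in>neighbours V E u. f v) = (\<Sum>v\<in>V. if E u v then f v else 0)"
  unfolding neighbours_def simple_graph_def by (simp add: sum.inter_filter)

lemma swap_nb: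
  assumes G: "simple_graph V E"
  shows "(\<Sum>u\<in>V. \<Sum>v\<in>neighbours V E u. f u v) = (\<Sum>u\<in>V. \<Sum>v\<in>neighbours V E u. f v u)"
proof -
  have sym: "\<And>u v. E u v = E v u" using G unfolding simple_graph_def by blast
  have "(\<Sum>u\<in>V. \<Sum>v\<in>neighbours V E u. f u v) = (\<Sum>u\<in>V. \<Sum>v\<in>V. if E u v then f u v else 0)"
    by (intro sum.cong refl sum_nb[OF G])
  also have "\<dots> = (\<Sum>v\<in>V. \<Sum>u\<in>V. if E u v then f u v else 0)" by (rule sum.swap)
  also have "\<dots> = (\<Sum>v\<in>V. \<Sum>u\<in>V. if E v u then f u v else 0)" using sym by simp
  also have "\<dots> = (\<Sum>v\<in>V. \<Sum>u\<in>neighbours V E v. f u v)" by (intro sum.cong refl sum_nb[OF G, symmetric])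
  finally show ?thesis .
qed

lemma Mop_sym:
  assumes G: "simple_graph V E"
  shows "(\<Sum>u\<in>V. a u * Mop V E D b u) = (\<Sum>u\<in>V. b u * Mop V E D a u)"
proof -
  have "(\<Sum>u\<in>V. a u * Mop V E D b u) = (\<Sum>u\<in>V. D u * a u * b u) + (\<Sum>u\<in>V. \<Sum>v\<in>neighbours V E u. a u * b v)"
    unfolding Mop_def by (simp add: algebra_simps sum.distrib sum_distrib_left)
  also have "(\<Sum>u\<in>V. \<Sum>v\<in>neighbours V E u. a u * b v) = (\<Sum>u\<in>V. \<Sum>v\<in>neighbours V E u. a v * b u)"
    by (rule swap_nb[OF G])
  also have "(\<Sum>u\<in>V. D u * a u * b u) + (\<Sum>u\<in>V. \<Sum>v\<in>neighbours V E u. a v * b u) = (\<Sum>u\<in>V. b u * Mop V E D a u)"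
    unfolding Mop_def by (simp add: algebra_simps sum.distrib sum_distrib_left)
  finally show ?thesis .
qed

lemma sq_sum:
  assumes G: "simple_graph V E"
  shows "(\<Sum>u\<in>V. \<Sum>v\<in>neighbours V E u. (a u ^ 2 + a v ^ 2) / 2) = (\<Sum>u\<in>V. real (degree V E u) * a u ^ 2)"
proof -
  have "(\<Sum>u\<in>V. \<Sum>v\<in>neighbours V E u. (a u ^ 2 + a v ^ 2) / 2)
     = (\<Sum>u\<in>V. \<Sum>v\<in>neighbours V E u. a u ^ 2 / 2) + (\<Sum>u\<in>V. \<Sum>v\<in>neighbours V E u. a v ^ 2 / 2)"
    by (simp add: add_divide_distrib sum.distrib)
  also have "(\<Sum>u\<in>V. \<Sum>v\<in>neighbours V E u. a v ^ 2 / 2) = (\<Sum>u\<in>V. \<Sum>v\<in>neighbours V E u. a u ^ 2 / 2)"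
    by (rule swap_nb[OF G])
  finally show ?thesis unfolding degree_def by (simp add: sum.distrib[symmetric])
qed

lemma Mop_psd:
  assumes G: "simple_graph V E" and D: "\<forall>u\<in>V. D u \<ge> real (degree V E u)"
  shows "(\<Sum>u\<in>V. a u * Mop V E D a u) \<ge> 0"
proof -
  have "(\<Sum>u\<in>V. a u * Mop V E D a u) = (\<Sum>u\<in>V. D u * a u ^ 2) + (\<Sum>u\<in>V. \<Sum>v\<in>neighbours V E u. a u * a v)"
    unfolding Mop_def by (simp add: algebra_simps power2_eq_square sum.distrib sum_distrib_left)
  moreover have "(\<Sum>u\<in>V. \<Sum>v\<in>neighbours V E u. a u * a v) \<ge> - (\<Sum>u\<in>V. \<Sum>v\<in>neighbours V E u. (a u ^ 2 + a v ^ 2) / 2)"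
  proof -
    have "(\<Sum>u\<in>V. \<Sum>v\<in>neighbours V E u. - ((a u ^ 2 + a v ^ 2) / 2)) \<le> (\<Sum>u\<in>V. \<Sum>v\<in>neighbours V E u. a u * a v)"
    proof (intro sum_mono)
      fix u v
      have "0 \<le> (a u + a v)^2" by simp
      then show "- ((a u ^ 2 + a v ^ 2) / 2) \<le> a u * a v" by (simp add: power2_sum field_simps)
    qed
    then show ?thesis by (simp add: sum_negf)
  qed
  moreover have "(\<Sum>u\<in>V. real (degree V E u) * a u ^ 2) \<le> (\<Sum>u\<in>V. D u * a u ^ 2)"
    using D by (intro sum_mono mult_right_mono) auto
  ultimately show ?thesis using sq_sum[OF G, of a] by linarith
qed

lemma Mop_upper:
  assumes G: "simple_graph V E"
  shows "(\<Sum>u\<in>V. a u * Mop V E D a u) \<le> (\<Sum>u\<in>V. (D u + real (degree V E u)) * a u ^ 2)"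
proof -
  have "(\<Sum>u\<in>V. a u * Mop V E D a u) = (\<Sum>u\<in>V. D u * a u ^ 2) + (\<Sum>u\<in>V. \<Sum>v\<in>neighbours V E u. a u * a v)"
    unfolding Mop_def by (simp add: algebra_simps power2_eq_square sum.distrib sum_distrib_left)
  moreover have "(\<Sum>u\<in>V. \<Sum>v\<in>neighbours V E u. a u * a v) \<le> (\<Sum>u\<in>V. \<Sum>v\<in>neighbours V E u. (a u ^ 2 + a v ^ 2) / 2)"
  proof (intro sum_mono)
    fix u v
    have "0 \<le> (a u - a v)^2" by simp
    then show "a u * a v \<le> (a u ^ 2 + a v ^ 2) / 2" by (simp add: power2_diff field_simps)
  qed
  ultimately show ?thesis using sq_sum[OF G, of a] by (simp add: algebra_simps sum.distrib)
qed

lemma lemmaL: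
  assumes G: "simple_graph V E" and Dpos: "\<forall>u\<in>V. D u > 0"
    and Dsum: "\<forall>v\<in>V. (\<Sum>u\<in>neighbours V E v. 1 / D u) \<le> 1"
    and e: "\<forall>u\<in>V. Mop V E D e u \<ge> 0"
  shows "(\<Sum>u\<in>V. e u) \<ge> 0"
proof -
  define pos where "pos = (\<lambda>u. max 0 (e u))"
  define neg where "neg = (\<lambda>u. max 0 (- e u))"
  have eq: "\<And>u. e u = pos u - neg u" unfolding pos_def neg_def by auto
  have pos0: "\<And>u. pos u \<ge> 0" unfolding pos_def by auto
  have step: "\<And>u. u \<in> V \<Longrightarrow> neg u \<le> (\<Sum>v\<in>neighbours V E u. pos v / D u)"
  proof -
    fix u assume u: "u \<in> V"
    have "(\<Sum>v\<in>neighbours V E u. e v) \<le> (\<Sum>v\<in>neighbours V E u. pos v)"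
      by (intro sum_mono) (auto simp: pos_def)
    moreover have "D u * e u + (\<Sum>v\<in>neighbours V E u. e v) \<ge> 0" using e u unfolding Mop_def by auto
    ultimately have "- e u * D u \<le> (\<Sum>v\<in>neighbours V E u. pos v)" by (simp add: algebra_simps)
    hence "- e u \<le> (\<Sum>v\<in>neighbours V E u. pos v) / D u" using Dpos u by (simp add: field_simps)
    moreover have "0 \<le> (\<Sum>v\<in>neighbours V E u. pos v) / D u" by (intro divide_nonneg_pos sum_nonneg) (use Dpos u pos0 in auto)
    ultimately show "neg u \<le> (\<Sum>v\<in>neighbours V E u. pos v / D u)"
      unfolding neg_def by (simp add: sum_divide_distrib)
  qed
  have "(\<Sum>u\<in>V. neg u) \<le> (\<Sum>u\<in>V. \<Sum>v\<in>neighbours V E u. pos v / D u)"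
    using step by (rule sum_mono)
  also have "\<dots> = (\<Sum>u\<in>V. \<Sum>v\<in>neighbours V E u. pos u / D v)" by (rule swap_nb[OF G])
  also have "\<dots> = (\<Sum>u\<in>V. pos u * (\<Sum>v\<in>neighbours V E u. 1 / D v))"
    by (simp add: sum_distrib_left)
  also have "\<dots> \<le> (\<Sum>u\<in>V. pos u * 1)"
    using Dsum pos0 by (intro sum_mono mult_left_mono) auto
  finally have "(\<Sum>u\<in>V. neg u) \<le> (\<Sum>u\<in>V. pos u)" by simp
  then show ?thesis by (simp add: eq sum_subtractf)
qed

theorem mainTheorem7:
  fixes V :: "'a set" and E :: "'a \<Rightarrow> 'a \<Rightarrow> bool"
    and lam :: "'a \<Rightarrow> real" and x :: "'a \<Rightarrow> real"
  assumes G: "simple_graph V E"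
    and lam_pos: "\<forall>u\<in>V. lam u > 0"
    and lam_small: "\<forall>u\<in>V. lam u * real (max_degree V E) < 1"
    and x_nonneg: "\<forall>u\<in>V. x u \<ge> 0"
    and x_cover: "\<forall>u\<in>V. mat_vec V (\<lambda>u v. diag_B lam u v + adj_matrix E u v) x u \<ge> 1"
  shows "(\<Sum>u\<in>V. x u) \<ge> (\<Sum>u\<in>V. lam u / (1 + (real (degree V E u) + 1) * lam u))"
proof -
  define D where "D = (\<lambda>u. 1 + 1 / lam u)"
  define Mf where "Mf = (\<lambda>u v. diag_B lam u v + adj_matrix E u v)"
  define \<Delta> where "\<Delta> = real (max_degree V E)"
  have finV: "finite V" using G unfolding simple_graph_def by blast
  have irr: "\<And>u. \<not> E u u" using G unfolding simple_graph_def by blast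
  have \<Delta>0: "\<Delta> \<ge> 0" unfolding \<Delta>_def by simp
  have degle: "\<And>u. u \<in> V \<Longrightarrow> real (degree V E u) \<le> \<Delta>"
  proof -
    fix u assume u: "u \<in> V"
    have "degree V E u \<le> max_degree V E" unfolding max_degree_def
      by (rule Max_ge) (use finV u in auto)
    then show "real (degree V E u) \<le> \<Delta>" unfolding \<Delta>_def by simp
  qed
  have Dge: "\<And>u. u \<in> V \<Longrightarrow> D u \<ge> 1 + \<Delta>"
  proof -
    fix u assume u: "u \<in> V"
    have l: "lam u > 0" using lam_pos u by blast
    have "lam u * \<Delta> < 1" using lam_small u unfolding \<Delta>_def by blast
    then have "\<Delta> < 1 / lam u" using l by (simp add: field_simps)
    then show "D u \<ge> 1 + \<Delta>" unfolding D_def by simp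
  qed
  have D0: "\<forall>u\<in>V. D u > 0"
  proof
    fix u assume "u \<in> V"
    then have "D u \<ge> 1 + \<Delta>" by (rule Dge)
    then show "D u > 0" using \<Delta>0 by linarith
  qed
  have Ddeg: "\<forall>u\<in>V. D u \<ge> real (degree V E u)"
  proof
    fix u assume u: "u \<in> V"
    show "D u \<ge> real (degree V E u)" using Dge[OF u] degle[OF u] by linarith
  qed
  have Dsum: "\<forall>v\<in>V. (\<Sum>u\<in>neighbours V E v. 1 / D u) \<le> 1"
  proof
    fix v assume v: "v \<in> V"
    have "(\<Sum>u\<in>neighbours V E v. 1 / D u) \<le> (\<Sum>u\<in>neighbours V E v. 1 / (1 + \<Delta>))"
    proof (rule sum_mono)
      fix u assume "u \<in> neighbours V E v"
      then have "u \<in> V" unfolding neighbours_def by simp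
      then have "D u \<ge> 1 + \<Delta>" by (rule Dge)
      then show "1 / D u \<le> 1 / (1 + \<Delta>)" using \<Delta>0 by (intro divide_left_mono) auto
    qed
    also have "\<dots> = real (degree V E v) / (1 + \<Delta>)" unfolding degree_def by simp
    also have "\<dots> \<le> 1" using degle[OF v] \<Delta>0 by simp
    finally show "(\<Sum>u\<in>neighbours V E v. 1 / D u) \<le> 1" .
  qed
  have mv: "\<And>y u. u \<in> V \<Longrightarrow> mat_vec V Mf y u = Mop V E D y u"
  proof -
    fix y u assume u: "u \<in> V"
    have "mat_vec V Mf y u = (\<Sum>v\<in>V. diag_B lam u v * y v) + (\<Sum>v\<in>V. adj_matrix E u v * y v)"
      unfolding mat_vec_def Mf_def by (simp add: distrib_right sum.distrib)
    also have "(\<Sum>v\<in>V. diag_B lam u v * y v) = D u * y u"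
    proof -
      have "(\<Sum>v\<in>V. diag_B lam u v * y v) = (\<Sum>v\<in>V. if u = v then D u * y v else 0)"
        unfolding diag_B_def D_def by (intro sum.cong) auto
      also have "\<dots> = D u * y u" using finV u by (simp add: sum.delta sum.delta')
      finally show ?thesis .
    qed
    also have "(\<Sum>v\<in>V. adj_matrix E u v * y v) = (\<Sum>v\<in>neighbours V E u. y v)"
    proof -
      have "(\<Sum>v\<in>V. adj_matrix E u v * y v) = (\<Sum>v\<in>V. if E u v then y v else 0)"
        unfolding adj_matrix_def by (intro sum.cong) auto
      also have "\<dots> = (\<Sum>v\<in>neighbours V E u. y v)" by (rule sum_nb[OF G, symmetric])
      finally show ?thesis .
    qed
    finally show "mat_vec V Mf y u = Mop V E D y u" unfolding Mop_def .
  qed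
  have dom: "\<forall>u\<in>V. (\<Sum>v\<in>V-{u}. \<bar>Mf u v\<bar>) < \<bar>Mf u u\<bar>"
  proof
    fix u assume u: "u \<in> V"
    have "(\<Sum>v\<in>V-{u}. \<bar>Mf u v\<bar>) = (\<Sum>v\<in>V-{u}. if E u v then 1 else 0)"
      unfolding Mf_def diag_B_def adj_matrix_def by (intro sum.cong) auto
    also have "\<dots> = (\<Sum>v\<in>V. if E u v then 1 else 0)"
      using finV u irr by (simp add: sum.remove)
    also have "\<dots> = real (degree V E u)"
      using sum_nb[OF G, where u=u and f="\<lambda>_. 1::real", symmetric] unfolding degree_def by simp
    also have "\<dots> < D u" using Dge[OF u] degle[OF u] by simp
    also have "D u = \<bar>Mf u u\<bar>"
    proof -
      have "Mf u u = D u" unfolding Mf_def diag_B_def adj_matrix_def D_def using irr by simp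
      moreover have "D u > 0" using D0 u by blast
      ultimately show ?thesis by simp
    qed
    finally show "(\<Sum>v\<in>V-{u}. \<bar>Mf u v\<bar>) < \<bar>Mf u u\<bar>" .
  qed
  obtain z where z0: "\<forall>u\<in>V. (\<Sum>v\<in>V. Mf u v * z v) = 1"
    using gauss_solve[OF finV dom, of "\<lambda>_. 1"] by blast
  have zM: "\<And>u. u \<in> V \<Longrightarrow> Mop V E D z u = 1"
    using z0 mv unfolding mat_vec_def by metis
  have xM: "\<And>u. u \<in> V \<Longrightarrow> Mop V E D x u \<ge> 1"
    using x_cover mv unfolding Mf_def by metis
  have lin: "\<And>a b u. Mop V E D (\<lambda>v. a v - b v) u = Mop V E D a u - Mop V E D b u"
    unfolding Mop_def by (simp add: algebra_simps sum_subtractf)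
  have "(\<Sum>u\<in>V. x u - z u) \<ge> 0"
    by (rule lemmaL[OF G D0 Dsum]) (use xM zM lin in auto)
  hence xz: "(\<Sum>u\<in>V. x u) \<ge> (\<Sum>u\<in>V. z u)" by (simp add: sum_subtractf)
  define w where "w = (\<lambda>u. 1 / (D u + real (degree V E u)))"
  have wpos: "\<And>u. u \<in> V \<Longrightarrow> D u + real (degree V E u) > 0" using D0 by (smt (verit) of_nat_0_le_iff)
  have ww: "(\<Sum>u\<in>V. w u * Mop V E D w u) \<le> (\<Sum>u\<in>V. w u)"
  proof -
    have "(\<Sum>u\<in>V. w u * Mop V E D w u) \<le> (\<Sum>u\<in>V. (D u + real (degree V E u)) * w u ^ 2)"
      by (rule Mop_upper[OF G])
    also have "\<dots> = (\<Sum>u\<in>V. w u)"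
      using wpos by (intro sum.cong) (auto simp: w_def power2_eq_square)
    finally show ?thesis .
  qed
  have zz: "(\<Sum>u\<in>V. z u * Mop V E D z u) = (\<Sum>u\<in>V. z u)" using zM by simp
  have wz: "(\<Sum>u\<in>V. w u * Mop V E D z u) = (\<Sum>u\<in>V. w u)" using zM by simp
  have zw: "(\<Sum>u\<in>V. z u * Mop V E D w u) = (\<Sum>u\<in>V. w u)" using wz Mop_sym[OF G] by metis
  have "0 \<le> (\<Sum>u\<in>V. (z u - w u) * Mop V E D (\<lambda>v. z v - w v) u)"
    by (rule Mop_psd[OF G Ddeg])
  also have "\<dots> = (\<Sum>u\<in>V. z u * Mop V E D z u) - (\<Sum>u\<in>V. z u * Mop V E D w u)
      - (\<Sum>u\<in>V. w u * Mop V E D z u) + (\<Sum>u\<in>V. w u * Mop V E D w u)"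
    unfolding lin by (simp add: algebra_simps sum.distrib sum_subtractf)
  finally have zw2: "(\<Sum>u\<in>V. z u) \<ge> (\<Sum>u\<in>V. w u)" using zz zw wz ww by linarith
  have "(\<Sum>u\<in>V. lam u / (1 + (real (degree V E u) + 1) * lam u)) = (\<Sum>u\<in>V. w u)"
  proof (rule sum.cong)
    fix u assume u: "u \<in> V"
    then have l: "lam u > 0" using lam_pos by auto
    show "lam u / (1 + (real (degree V E u) + 1) * lam u) = w u"
      unfolding w_def D_def using l by (simp add: field_simps)
  qed simp
  then show ?thesis using xz zw2 by linarith
qed

end
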